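(* Let $p\ge2$ and $q\ge2$, and let $\mathcal M_{\mathrm{reg}}$ and $\mathcal A_{\mathrm{class}}$ be as in the context. Then $\mathcal A_{\mathrm{class}}$ separates the points of $\mathcal M_{\mathrm{reg}}$: for any two distinct points of $\mathcal M_{\mathrm{reg}}$ there is a function in $\mathcal A_{\mathrm{class}}$ taking distinct values at them.
   Context: Let $\Gamma=\mathbb{R}^{2(p+q)}$ with coordinates $(\boldsymbol u,\boldsymbol p,\boldsymbol v,\boldsymbol\pi)$, $\boldsymbol u,\boldsymbol p\in\mathbb{R}^p$, $\boldsymbol v,\boldsymbol\pi\in\mathbb{R}^q$. Let $\bar\Gamma$ be the set where $H_1=\tfrac12(\boldsymbol p^2-\boldsymbol v^2)$, $H_2=\tfrac12(\boldsymbol\pi^2-\boldsymbol u^2)$ and $D=\boldsymbol u\cdot\boldsymbol p-\boldsymbol v\cdot\boldsymbol\pi$ all vanish. ${\mathrm{SL}}(2,\mathbb{R})$ acts on $\Gamma$ by $(\boldsymbol u,\boldsymbol p)^T\mapsto g(\boldsymbol u,\boldsymbol p)^T$, $(\boldsymbol\pi,\boldsymbol v)^T\mapsto g(\boldsymbol\pi,\boldsymbol v)^T$ (componentwise on the pairs $(u_i,p_i)$, $(\pi_j,v_j)$), preserving $\bar\Gamma$. Let $\bar\Gamma_{\mathrm{reg}}$ be the set of points of $\bar\Gamma$ at which both pairs $(\boldsymbol u,\boldsymbol p)$ and $(\boldsymbol v,\boldsymbol\pi)$ are linearly independent, and $\mathcal M_{\mathrm{reg}}=\bar\Gamma_{\mathrm{reg}}/{\mathrm{SL}}(2,\mathbb{R})$.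 For $x_k=(u_k,p_k)$ ($1\le k\le p$) and $x_{p+k}=(\pi_k,v_k)$ ($1\le k\le q$), set $\mathcal O_{kj}=x_k\times x_j$ (scalar cross product on $\mathbb{R}^2$); these are gauge invariant and $\mathcal A_{\mathrm{class}}$ is the algebra of functions on $\mathcal M_{\mathrm{reg}}$ generated by them. *)

theory Defs
  imports Main "HOL-Analysis.Analysis"
begin

text \<open>A point of Gamma = R^(2(p+q)) with coordinates (u, pp, v, pa): u, pp indexed by {0..<p},
  v, pa indexed by {0..<q}. Coordinates are functions nat => real; only indices in range matter.\<close>
type_synonym point = "(nat \<Rightarrow> real) \<times> (nat \<Rightarrow> real) \<times> (nat \<Rightarrow> real) \<times> (nat \<Rightarrow> real)"

definition H1 :: "nat \<Rightarrow> nat \<Rightarrow> point \<Rightarrow> real" where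
  "H1 p q z = (case z of (u, pp, v, pa) \<Rightarrow>
     ((\<Sum>i<p. (pp i)^2) - (\<Sum>j<q. (v j)^2)) / 2)"

definition H2 :: "nat \<Rightarrow> nat \<Rightarrow> point \<Rightarrow> real" where
  "H2 p q z = (case z of (u, pp, v, pa) \<Rightarrow>
     ((\<Sum>j<q. (pa j)^2) - (\<Sum>i<p. (u i)^2)) / 2)"

definition Dc :: "nat \<Rightarrow> nat \<Rightarrow> point \<Rightarrow> real" where
  "Dc p q z = (case z of (u, pp, v, pa) \<Rightarrow>
     (\<Sum>i<p. u i * pp i) - (\<Sum>j<q. v j * pa j))"

definition lin_indep2 :: "nat \<Rightarrow> (nat \<Rightarrow> real) \<Rightarrow> (nat \<Rightarrow> real) \<Rightarrow> bool" where
  "lin_indep2 n a b = (\<forall>s t. (\<forall>i<n. s * a i + t * b i = 0) \<longrightarrow> s = 0 \<and> t = 0)"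

definition Gamma_bar :: "nat \<Rightarrow> nat \<Rightarrow> point set" where
  "Gamma_bar p q = {z. H1 p q z = 0 \<and> H2 p q z = 0 \<and> Dc p q z = 0}"

definition Gamma_reg :: "nat \<Rightarrow> nat \<Rightarrow> point set" where
  "Gamma_reg p q = {z \<in> Gamma_bar p q. case z of (u, pp, v, pa) \<Rightarrow>
      lin_indep2 p u pp \<and> lin_indep2 q v pa}"

text \<open>SL(2,R): matrices ((a,b),(c,d)) with ad - bc = 1, acting on column vectors.\<close>
type_synonym mat2 = "real \<times> real \<times> real \<times> real"

definition SL2 :: "mat2 set" where
  "SL2 = {(a, b, c, d). a * d - b * c = 1}"

definition act2 :: "mat2 \<Rightarrow> real \<times> real \<Rightarrow> real \<times> real" where
  "act2 g x = (case g of (a, b, c, d) \<Rightarrow> case x of (s, t) \<Rightarrow> (a * s + b * t, c * s + d * t))"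

definition act :: "mat2 \<Rightarrow> point \<Rightarrow> point" where
  "act g z = (case z of (u, pp, v, pa) \<Rightarrow>
     ((\<lambda>i. fst (act2 g (u i, pp i))), (\<lambda>i. snd (act2 g (u i, pp i))),
      (\<lambda>j. snd (act2 g (pa j, v j))), (\<lambda>j. fst (act2 g (pa j, v j)))))"

definition pt_eq :: "nat \<Rightarrow> nat \<Rightarrow> point \<Rightarrow> point \<Rightarrow> bool" where
  "pt_eq p q z w = (case z of (u, pp, v, pa) \<Rightarrow> case w of (u', pp', v', pa') \<Rightarrow>
     (\<forall>i<p. u i = u' i \<and> pp i = pp' i) \<and> (\<forall>j<q. v j = v' j \<and> pa j = pa' j))"

text \<open>Two points of Gamma_reg define the same point of M_reg iff they lie in one SL(2,R)-orbit.\<close>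
definition same_orbit :: "nat \<Rightarrow> nat \<Rightarrow> point \<Rightarrow> point \<Rightarrow> bool" where
  "same_orbit p q z w = (\<exists>g\<in>SL2. pt_eq p q (act g z) w)"

text \<open>x_k for 0 <= k < p+q (0-based): x_k = (u_k,p_k) for k<p, x_{p+k} = (pi_k,v_k).\<close>
definition xk :: "nat \<Rightarrow> point \<Rightarrow> nat \<Rightarrow> real \<times> real" where
  "xk p z k = (case z of (u, pp, v, pa) \<Rightarrow>
     if k < p then (u k, pp k) else (pa (k - p), v (k - p)))"

definition cross2 :: "real \<times> real \<Rightarrow> real \<times> real \<Rightarrow> real" where
  "cross2 x y = fst x * snd y - snd x * fst y"

definition Obs :: "nat \<Rightarrow> nat \<Rightarrow> nat \<Rightarrow> point \<Rightarrow> real" where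
  "Obs p k j z = cross2 (xk p z k) (xk p z j)"

text \<open>A_class: the (unital, real) algebra of functions generated by the O_kj, 0 <= k,j < p+q.
  Its elements are gauge invariant, hence functions on M_reg.\<close>
inductive_set A_class :: "nat \<Rightarrow> nat \<Rightarrow> (point \<Rightarrow> real) set" for p q where
  gen: "k < p + q \<Longrightarrow> j < p + q \<Longrightarrow> Obs p k j \<in> A_class p q"
| const: "(\<lambda>_. c) \<in> A_class p q"
| add: "f \<in> A_class p q \<Longrightarrow> g \<in> A_class p q \<Longrightarrow> (\<lambda>z. f z + g z) \<in> A_class p q"
| mult: "f \<in> A_class p q \<Longrightarrow> g \<in> A_class p q \<Longrightarrow> (\<lambda>z. f z * g z) \<in> A_class p q"

end

theory Submission
  imports Defs
begin

lemma minor_exists: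
  assumes "lin_indep2 n a b"
  shows "\<exists>i<n. \<exists>j<n. a i * b j - b i * a j \<noteq> 0"
proof (rule ccontr)
  assume H: "\<not> ?thesis"
  show False
  proof (cases "\<forall>i<n. a i = 0")
    case True
    then have "\<forall>i<n. 1 * a i + 0 * b i = 0" by simp
    then have "(1::real) = 0 \<and> (0::real) = 0" using assms unfolding lin_indep2_def by blast
    then show False by simp
  next
    case False
    then obtain i0 where i0: "i0 < n" "a i0 \<noteq> 0" by auto
    have "\<forall>i<n. b i0 * a i + (- a i0) * b i = 0"
    proof (intro allI impI)
      fix i assume "i < n"
      with H i0 have "a i0 * b i - b i0 * a i = 0" by auto
      then show "b i0 * a i + (- a i0) * b i = 0" by (simp add: algebra_simps)
    qed
    then have "b i0 = 0 \<and> - a i0 = 0" using assms unfolding lin_indep2_def by blast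
    with i0 show False by simp
  qed
qed

lemma divlem: "(A::real)/c * (B/c) - C/c*(D/c) = (A*B - C*D)/(c*c)"
  by (simp add: diff_divide_distrib)

lemma divlem2: "(A::real)/c * sa + B/c * ta = (A* sa + B*ta)/c"
  by (simp add: add_divide_distrib)

definition gmat :: "real \<times> real \<Rightarrow> real \<times> real \<Rightarrow> real \<times> real \<Rightarrow> real \<times> real \<Rightarrow> mat2" where
  "gmat X Y Z W = (let x1 = fst X; x2 = snd X; x3 = fst Y; x4 = snd Y;
     y1 = fst Z; y2 = snd Z; y3 = fst W; y4 = snd W; c = x1*x4 - x2*x3 in
     ((y1*x4 - y3*x2)/c, (y3*x1 - y1*x3)/c, (y2*x4 - y4*x2)/c, (y4*x1 - y2*x3)/c))"

lemma gmat_SL2: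
  assumes "cross2 X Y \<noteq> 0" "cross2 Z W = cross2 X Y"
  shows "gmat X Y Z W \<in> SL2"
proof -
  obtain x1 x2 x3 x4 y1 y2 y3 y4 where e: "X = (x1,x2)" "Y = (x3,x4)" "Z = (y1,y2)" "W = (y3,y4)"
    by (cases X, cases Y, cases Z, cases W) auto
  let ?c = "x1*x4 - x2*x3"
  have c: "?c \<noteq> 0" and cy: "y1*y4 - y2*y3 = ?c" using assms by (auto simp: e cross2_def)
  have "(y1*x4 - y3*x2) * (y4*x1 - y2*x3) - (y3*x1 - y1*x3) * (y2*x4 - y4*x2) = (y1*y4 - y2*y3) * ?c"
    by (simp add: algebra_simps)
  also have "\<dots> = ?c * ?c" using cy by simp
  finally have h: "(y1*x4 - y3*x2) * (y4*x1 - y2*x3) - (y3*x1 - y1*x3) * (y2*x4 - y4*x2) = ?c * ?c" .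
  have "(y1*x4 - y3*x2)/?c * ((y4*x1 - y2*x3)/?c) - (y3*x1 - y1*x3)/?c * ((y2*x4 - y4*x2)/?c)
     = ((y1*x4 - y3*x2) * (y4*x1 - y2*x3) - (y3*x1 - y1*x3) * (y2*x4 - y4*x2)) / (?c * ?c)"
    by (rule divlem)
  also have "\<dots> = 1" using c h by simp
  finally have "(y1*x4 - y3*x2)/?c * ((y4*x1 - y2*x3)/?c) - (y3*x1 - y1*x3)/?c * ((y2*x4 - y4*x2)/?c) = 1" .
  then show ?thesis unfolding SL2_def gmat_def e Let_def fst_conv snd_conv
    by (simp only: mem_Collect_eq prod.case)
qed

lemma gmat_act:
  assumes "cross2 X Y \<noteq> 0" "cross2 Z W = cross2 X Y"
    and "cross2 V Y = cross2 V' W" "cross2 X V = cross2 Z V'"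
  shows "act2 (gmat X Y Z W) V = V'"
proof -
  obtain x1 x2 x3 x4 y1 y2 y3 y4 sa ta s2 t2 where e: "X = (x1,x2)" "Y = (x3,x4)" "Z = (y1,y2)" "W = (y3,y4)"
    "V = (sa,ta)" "V' = (s2,t2)"
    by (cases X, cases Y, cases Z, cases W, cases V, cases V') auto
  let ?c = "x1*x4 - x2*x3"
  have c: "?c \<noteq> 0" and cy: "y1*y4 - y2*y3 = ?c" using assms by (auto simp: e cross2_def)
  have h1: "sa*x4 - ta*x3 = s2*y4 - t2*y3" and h2: "x1*ta - x2* sa = y1*t2 - y2* s2"
    using assms by (auto simp: e cross2_def)
  have a1: "(y1*x4 - y3*x2) * sa + (y3*x1 - y1*x3) * ta = y1*(sa*x4 - ta*x3) + y3*(x1*ta - x2* sa)" by (simp add: algebra_simps)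
  also have "\<dots> = y1*(s2*y4 - t2*y3) + y3*(y1*t2 - y2* s2)" using h1 h2 by simp
  also have "\<dots> = s2 * (y1*y4 - y2*y3)" by (simp add: algebra_simps)
  finally have a1: "(y1*x4 - y3*x2) * sa + (y3*x1 - y1*x3) * ta = s2 * ?c" using cy by simp
  have a2: "(y2*x4 - y4*x2) * sa + (y4*x1 - y2*x3) * ta = y2*(sa*x4 - ta*x3) + y4*(x1*ta - x2* sa)" by (simp add: algebra_simps)
  also have "\<dots> = y2*(s2*y4 - t2*y3) + y4*(y1*t2 - y2* s2)" using h1 h2 by simp
  also have "\<dots> = t2 * (y1*y4 - y2*y3)" by (simp add: algebra_simps)
  finally have a2: "(y2*x4 - y4*x2) * sa + (y4*x1 - y2*x3) * ta = t2 * ?c" using cy by simp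
  have f1: "(y1*x4 - y3*x2)/?c * sa + (y3*x1 - y1*x3)/?c * ta = s2"
  proof -
    have "(y1*x4 - y3*x2)/?c * sa + (y3*x1 - y1*x3)/?c * ta = ((y1*x4 - y3*x2) * sa + (y3*x1 - y1*x3) * ta) / ?c"
      by (rule divlem2)
    then show ?thesis using a1 c by simp
  qed
  have f2: "(y2*x4 - y4*x2)/?c * sa + (y4*x1 - y2*x3)/?c * ta = t2"
  proof -
    have "(y2*x4 - y4*x2)/?c * sa + (y4*x1 - y2*x3)/?c * ta = ((y2*x4 - y4*x2) * sa + (y4*x1 - y2*x3) * ta) / ?c"
      by (rule divlem2)
    then show ?thesis using a2 c by simp
  qed
  show ?thesis unfolding act2_def gmat_def e Let_def fst_conv snd_conv prod.case
    by (simp only: f1 f2)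
qed

theorem mainTheorem5:
  fixes p q :: nat and z w :: point
  assumes "p \<ge> 2" and "q \<ge> 2"
    and "z \<in> Gamma_reg p q" and "w \<in> Gamma_reg p q"
    and "\<not> same_orbit p q z w"
  shows "\<exists>f \<in> A_class p q. f z \<noteq> f w"
proof (rule ccontr)
  assume "\<not> ?thesis"
  then have eq: "\<And>k j. k < p + q \<Longrightarrow> j < p + q \<Longrightarrow> Obs p k j z = Obs p k j w"
    using A_class.gen by blast
  obtain u pp v pa where z: "z = (u, pp, v, pa)" by (cases z) auto
  obtain u' pp' v' pa' where w: "w = (u', pp', v', pa')" by (cases w) auto
  have "lin_indep2 p u pp" using assms(3) by (simp add: Gamma_reg_def z)
  then obtain a b where ab: "a < p" "b < p" "u a * pp b - pp a * u b \<noteq> 0"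
    using minor_exists by blast
  define X where "X k = xk p z k" for k
  define Y where "Y k = xk p w k" for k
  have O: "\<And>k j. k < p + q \<Longrightarrow> j < p + q \<Longrightarrow> cross2 (X k) (X j) = cross2 (Y k) (Y j)"
    using eq by (simp add: Obs_def X_def Y_def)
  have c: "cross2 (X a) (X b) \<noteq> 0" using ab by (simp add: X_def xk_def z cross2_def)
  have cw: "cross2 (Y a) (Y b) = cross2 (X a) (X b)" using O ab by simp
  define g where "g = gmat (X a) (X b) (Y a) (Y b)"
  have gS: "g \<in> SL2" unfolding g_def by (rule gmat_SL2[OF c cw])
  have gk: "act2 g (X k) = Y k" if "k < p + q" for k
    unfolding g_def
    by (rule gmat_act[OF c cw]) (use O ab that in auto)
  have "pt_eq p q (act g z) w"
    unfolding pt_eq_def act_def z w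
  proof (simp, intro conjI allI impI)
    fix i assume i: "i < p"
    have "act2 g (u i, pp i) = (u' i, pp' i)" using gk[of i] i by (simp add: X_def Y_def xk_def z w)
    then show "fst (act2 g (u i, pp i)) = u' i" "snd (act2 g (u i, pp i)) = pp' i" by simp_all
  next
    fix j assume j: "j < q"
    have "act2 g (pa j, v j) = (pa' j, v' j)" using gk[of "p + j"] j by (simp add: X_def Y_def xk_def z w)
    then show "snd (act2 g (pa j, v j)) = v' j" "fst (act2 g (pa j, v j)) = pa' j" by simp_all
  qed
  with gS assms(5) show False unfolding same_orbit_def by blast
qed

end
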